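(* Consider the following discrete-time individual-based colonisation model. There are $N$ individuals and time-steps $t\in\{0,1,\dots,T\}$ of length $\Delta>0$. Let $\bm{X}=(x_{t,j})$, $t\in\{0,\dots,T\}$, $j\in\{1,\dots,N\}$, with $x_{t,j}\in\{0,1\}$ ($1$ = colonised, $0$ = uncolonised), and write $\bm{x}_{t}=(x_{t,1},\dots,x_{t,N})$. Fix parameters $\bm{\theta}$, a known de-colonisation rate $\gamma>0$, an initial colonisation probability $p_0\in(0,1)$, and colonisation pressures $\lambda_j(t,\bm{x}_{t-1},\bm{\theta})>0$. The prior (transmission) model is: independently for each $j$, $x_{0,j}\sim\mathrm{Bernoulli}(p_0)$, and recursively for $t\ge 1$, $x_{t,j}\mid \bm{\theta},\bm{x}_{t-1}\sim \mathrm{Bernoulli}(1-e^{-\lambda_j(t,\bm{x}_{t-1},\bm{\theta})\Delta})$ if $x_{t-1,j}=0$ and $\sim\mathrm{Bernoulli}(e^{-\gamma\Delta})$ if $x_{t-1,j}=1$; denote its probability mass function by $\pi(\bm{X}\mid\bm{\theta})$. Observations $\bm{Y}=(y_{t,j})$ are given, for the tested pairs $(t,j)$, by independent $y_{t,j}\mid x_{t,j}\sim \mathrm{Bernoulli}(s_e)$ if $x_{t,j}=1$ and $\sim\mathrm{Bernoulli}(1-s_p)$ if $x_{t,j}=0$, with known $s_e,s_p\in[0,1]$; denote the likelihood by $\pi(\bm{Y}\mid\bm{X},\bm{\theta})$, and let $\pi(\bm{X}\mid\bm{\theta},\bm{Y})\propto \pi(\bm{Y}\mid\bm{X},\bm{\theta})\pi(\bm{X}\mid\bm{\theta})$.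 Let $p_{CU}=1-e^{-\gamma\Delta}$. For a matrix $\bm{U}=(u_{t,j})\in(0,1)^{(T+1)\times N}$ define the deterministic map $\bm{X}=f(\bm{U},\bm{\theta})$ by: $x_{0,j}=1$ iff $u_{0,j}<p_0$; and for $t=1,\dots,T$ (in increasing order), if $x_{t-1,j}=0$ then $x_{t,j}=1$ iff $u_{t,j}<1-e^{-\lambda_j(t,\bm{x}_{t-1},\bm{\theta})\Delta}$, while if $x_{t-1,j}=1$ then $x_{t,j}=0$ iff $u_{t,j}<p_{CU}$. For a state $\bm{X}$ define bounds $(a_{t,j},b_{t,j})$ by: $(0,p_0)$ if $x_{0,j}=1$ and $(p_0,1)$ if $x_{0,j}=0$ (for $t=0$); and for $t\ge1$, with $p_{UC}=1-e^{-\lambda_j(t,\bm{x}_{t-1},\bm{\theta})\Delta}$: $(0,p_{UC})$ if $(x_{t-1,j},x_{t,j})=(0,1)$, $(p_{UC},1)$ if $(0,0)$, $(0,p_{CU})$ if $(1,0)$, $(p_{CU},1)$ if $(1,1)$. The latent-variable proposal from the current state $\bm{X}$ is: (Step 1) sample $\bm{U}$ with independent entries $u_{t,j}\sim\mathrm{Unif}(a_{t,j},b_{t,j})$, bounds computed from $\bm{X}$; denote this density by $q(\bm{U}\mid\bm{\theta},\bm{X})$. (Step 2) choose one pair $(t',j')$ with probability $(1+a_{t',j'}-b_{t',j'})/\sum_{t=0}^T\sum_{j=1}^N(1+a_{t,j}-b_{t,j})$, sample $u^\ast_{t',j'}\sim\mathrm{Unif}\big((0,1)\setminus(a_{t',j'},b_{t',j'})\big)$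 and set $u^\ast_{t,j}=u_{t,j}$ for all other $(t,j)$; denote the density of this step by $q(\bm{U}^\ast\mid\bm{\theta},\bm{U})$ (bounds computed from $f(\bm{U},\bm{\theta})$). (Step 3) set $\bm{X}^\ast=f(\bm{U}^\ast,\bm{\theta})$; denote by $q(\bm{X}^\ast\mid\bm{\theta},\bm{U}^\ast)$ the (degenerate) distribution of this step, equal to $1$ if $\bm{X}^\ast=f(\bm{U}^\ast,\bm{\theta})$ and $0$ otherwise. The reverse move uses the same three steps from $\bm{X}^\ast$, i.e. the densities $q(\bm{U}^\ast\mid\bm{\theta},\bm{X}^\ast)$, $q(\bm{U}\mid\bm{\theta},\bm{U}^\ast)$, $q(\bm{X}\mid\bm{\theta},\bm{U})$. Then the Metropolis–Hastings acceptance probability of $\bm{X}^\ast$, \[ \alpha(\bm{X},\bm{X}^\ast)=\min\left\{1,\frac{\pi(\bm{X}^\ast\mid\bm{\theta},\bm{Y})}{\pi(\bm{X}\mid\bm{\theta},\bm{Y})}\cdot\frac{q(\bm{U}^\ast\mid\bm{\theta},\bm{X}^\ast)\,q(\bm{U}\mid\bm{\theta},\bm{U}^\ast)\,q(\bm{X}\mid\bm{\theta},\bm{U})}{q(\bm{U}\mid\bm{\theta},\bm{X})\,q(\bm{U}^\ast\mid\bm{\theta},\bm{U})\,q(\bm{X}^\ast\mid\bm{\theta},\bm{U}^\ast)}\right\}, \] simplifies to \[ \alpha(\bm{X},\bm{X}^\ast)=\min\left\{1,\frac{\pi(\bm{Y}\mid\bm{X}^\ast,\bm{\theta})}{\pi(\bm{Y}\mid\bm{X},\bm{\theta})}\cdot\frac{q(\bm{U}\mid\bm{\theta},\bm{U}^\ast)}{q(\bm{U}^\ast\mid\bm{\theta},\bm{U})}\right\}.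 \]
   Context: This is the latent-variable update ("Rippler" algorithm) within a Metropolis-within-Gibbs sampler targeting $\pi(\bm{\theta},\bm{X}\mid\bm{Y})$; the parameters $\bm{\theta}$ are held fixed during this update. The acceptance probability $\alpha(\bm{X},\bm{X}^\ast)$ is the usual Metropolis–Hastings ratio $\min\{1,\pi(\bm{X}^\ast\mid\bm{\theta},\bm{Y})q(\bm{X}\mid\bm{\theta},\bm{X}^\ast)/(\pi(\bm{X}\mid\bm{\theta},\bm{Y})q(\bm{X}^\ast\mid\bm{\theta},\bm{X}))\}$, where the forward proposal density is taken to be the product of the three step densities $q(\bm{U}\mid\bm{\theta},\bm{X})q(\bm{U}^\ast\mid\bm{\theta},\bm{U})q(\bm{X}^\ast\mid\bm{\theta},\bm{U}^\ast)$ and the reverse proposal density is $q(\bm{U}^\ast\mid\bm{\theta},\bm{X}^\ast)q(\bm{U}\mid\bm{\theta},\bm{U}^\ast)q(\bm{X}\mid\bm{\theta},\bm{U})$. *)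

theory Defs
  imports Complex_Main
begin

text \<open>States X are functions (time t, individual j) to bool; the relevant domain is
  t \<in> {0..T}, j \<in> {0..<N}.  The fixed parameter theta has an arbitrary type 'p;
  the colonisation pressure is lam j t xprev theta, where xprev is the previous row.\<close>

definition states :: "nat \<Rightarrow> nat \<Rightarrow> (nat \<Rightarrow> nat \<Rightarrow> bool) set" where
  "states T N = {X. \<forall>t j. X t j \<longrightarrow> t \<le> T \<and> j < N}"

definition pCU :: "real \<Rightarrow> real \<Rightarrow> real" where
  "pCU \<gamma> \<Delta> = 1 - exp (- \<gamma> * \<Delta>)"

definition pUC :: "(nat \<Rightarrow> nat \<Rightarrow> (nat \<Rightarrow> bool) \<Rightarrow> 'p \<Rightarrow> real) \<Rightarrow> 'p \<Rightarrow> real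
    \<Rightarrow> nat \<Rightarrow> nat \<Rightarrow> (nat \<Rightarrow> bool) \<Rightarrow> real" where
  "pUC lam \<theta> \<Delta> j t xprev = 1 - exp (- lam j t xprev \<theta> * \<Delta>)"

definition prior :: "nat \<Rightarrow> nat \<Rightarrow> real \<Rightarrow> real \<Rightarrow> real
    \<Rightarrow> (nat \<Rightarrow> nat \<Rightarrow> (nat \<Rightarrow> bool) \<Rightarrow> 'p \<Rightarrow> real) \<Rightarrow> 'p
    \<Rightarrow> (nat \<Rightarrow> nat \<Rightarrow> bool) \<Rightarrow> real" where
  "prior T N \<Delta> \<gamma> p0 lam \<theta> X =
     (\<Prod>j<N. (if X 0 j then p0 else 1 - p0)) *
     (\<Prod>t\<in>{1..T}. \<Prod>j<N.
        (if \<not> X (t - 1) j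
         then (if X t j then pUC lam \<theta> \<Delta> j t (X (t - 1)) else 1 - pUC lam \<theta> \<Delta> j t (X (t - 1)))
         else (if X t j then exp (- \<gamma> * \<Delta>) else 1 - exp (- \<gamma> * \<Delta>))))"

definition lik :: "(nat \<times> nat) set \<Rightarrow> real \<Rightarrow> real \<Rightarrow> (nat \<Rightarrow> nat \<Rightarrow> bool)
    \<Rightarrow> (nat \<Rightarrow> nat \<Rightarrow> bool) \<Rightarrow> real" where
  "lik S se sp Y X =
     (\<Prod>(t, j)\<in>S. (if X t j then (if Y t j then se else 1 - se)
                            else (if Y t j then 1 - sp else sp)))"

definition posterior :: "nat \<Rightarrow> nat \<Rightarrow> real \<Rightarrow> real \<Rightarrow> real
    \<Rightarrow> (nat \<Rightarrow> nat \<Rightarrow> (nat \<Rightarrow> bool) \<Rightarrow> 'p \<Rightarrow> real) \<Rightarrow> 'p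
    \<Rightarrow> (nat \<times> nat) set \<Rightarrow> real \<Rightarrow> real \<Rightarrow> (nat \<Rightarrow> nat \<Rightarrow> bool)
    \<Rightarrow> (nat \<Rightarrow> nat \<Rightarrow> bool) \<Rightarrow> real" where
  "posterior T N \<Delta> \<gamma> p0 lam \<theta> S se sp Y X =
     lik S se sp Y X * prior T N \<Delta> \<gamma> p0 lam \<theta> X /
     (\<Sum>X'\<in>states T N. lik S se sp Y X' * prior T N \<Delta> \<gamma> p0 lam \<theta> X')"

primrec frow :: "nat \<Rightarrow> real \<Rightarrow> real \<Rightarrow> real
    \<Rightarrow> (nat \<Rightarrow> nat \<Rightarrow> (nat \<Rightarrow> bool) \<Rightarrow> 'p \<Rightarrow> real) \<Rightarrow> 'p
    \<Rightarrow> (nat \<Rightarrow> nat \<Rightarrow> real) \<Rightarrow> nat \<Rightarrow> (nat \<Rightarrow> bool)" where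
  "frow N \<Delta> \<gamma> p0 lam \<theta> U 0 = (\<lambda>j. j < N \<and> U 0 j < p0)"
| "frow N \<Delta> \<gamma> p0 lam \<theta> U (Suc t) =
     (\<lambda>j. j < N \<and>
        (if \<not> frow N \<Delta> \<gamma> p0 lam \<theta> U t j
         then U (Suc t) j < pUC lam \<theta> \<Delta> j (Suc t) (frow N \<Delta> \<gamma> p0 lam \<theta> U t)
         else \<not> (U (Suc t) j < pCU \<gamma> \<Delta>)))"

definition fmap :: "nat \<Rightarrow> nat \<Rightarrow> real \<Rightarrow> real \<Rightarrow> real
    \<Rightarrow> (nat \<Rightarrow> nat \<Rightarrow> (nat \<Rightarrow> bool) \<Rightarrow> 'p \<Rightarrow> real) \<Rightarrow> 'p
    \<Rightarrow> (nat \<Rightarrow> nat \<Rightarrow> real) \<Rightarrow> (nat \<Rightarrow> nat \<Rightarrow> bool)" where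
  "fmap T N \<Delta> \<gamma> p0 lam \<theta> U = (\<lambda>t j. t \<le> T \<and> frow N \<Delta> \<gamma> p0 lam \<theta> U t j)"

definition bounds :: "real \<Rightarrow> real \<Rightarrow> real
    \<Rightarrow> (nat \<Rightarrow> nat \<Rightarrow> (nat \<Rightarrow> bool) \<Rightarrow> 'p \<Rightarrow> real) \<Rightarrow> 'p
    \<Rightarrow> (nat \<Rightarrow> nat \<Rightarrow> bool) \<Rightarrow> nat \<Rightarrow> nat \<Rightarrow> real \<times> real" where
  "bounds \<Delta> \<gamma> p0 lam \<theta> X t j =
     (if t = 0 then (if X 0 j then (0, p0) else (p0, 1))
      else (let pu = pUC lam \<theta> \<Delta> j t (X (t - 1)); pc = pCU \<gamma> \<Delta> in
            if \<not> X (t - 1) j then (if X t j then (0, pu) else (pu, 1))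
            else (if \<not> X t j then (0, pc) else (pc, 1))))"

text \<open>Convention (a version of the
  uniform density that agrees with the strict inequalities in f): the lower interval (0,p) is
  open, the upper interval (p,1) is taken as [p,1).  This only changes densities on null sets.\<close>
definition in_box :: "real \<times> real \<Rightarrow> real \<Rightarrow> bool" where
  "in_box ab u = (0 < u \<and> fst ab \<le> u \<and> u < snd ab)"

definition q1 :: "nat \<Rightarrow> nat \<Rightarrow> real \<Rightarrow> real \<Rightarrow> real
    \<Rightarrow> (nat \<Rightarrow> nat \<Rightarrow> (nat \<Rightarrow> bool) \<Rightarrow> 'p \<Rightarrow> real) \<Rightarrow> 'p
    \<Rightarrow> (nat \<Rightarrow> nat \<Rightarrow> bool) \<Rightarrow> (nat \<Rightarrow> nat \<Rightarrow> real) \<Rightarrow> real" where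
  "q1 T N \<Delta> \<gamma> p0 lam \<theta> X U =
     (\<Prod>t\<le>T. \<Prod>j<N. (let (a, b) = bounds \<Delta> \<gamma> p0 lam \<theta> X t j in
                        if in_box (a, b) (U t j) then 1 / (b - a) else 0))"

text \<open>Step 2 density q(U' | theta, U): mixture over the chosen pair (t,j), chosen with
  probability (1 + a - b)/sum, of a uniform draw on (0,1) minus the box of that entry,
  all other entries kept (density w.r.t. Lebesgue measure in the changed coordinate).\<close>
definition q2 :: "nat \<Rightarrow> nat \<Rightarrow> real \<Rightarrow> real \<Rightarrow> real
    \<Rightarrow> (nat \<Rightarrow> nat \<Rightarrow> (nat \<Rightarrow> bool) \<Rightarrow> 'p \<Rightarrow> real) \<Rightarrow> 'p
    \<Rightarrow> (nat \<Rightarrow> nat \<Rightarrow> real) \<Rightarrow> (nat \<Rightarrow> nat \<Rightarrow> real) \<Rightarrow> real" where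
  "q2 T N \<Delta> \<gamma> p0 lam \<theta> U U' =
     (let X = fmap T N \<Delta> \<gamma> p0 lam \<theta> U;
          w = (\<lambda>t j. 1 + fst (bounds \<Delta> \<gamma> p0 lam \<theta> X t j) - snd (bounds \<Delta> \<gamma> p0 lam \<theta> X t j));
          Z = (\<Sum>t\<le>T. \<Sum>j<N. w t j)
      in (\<Sum>t\<le>T. \<Sum>j<N. (w t j / Z) *
            (if (\<forall>t''\<le>T. \<forall>j''<N. (t'', j'') \<noteq> (t, j) \<longrightarrow> U' t'' j'' = U t'' j'') \<and>
                0 < U' t j \<and> U' t j < 1 \<and>
                \<not> in_box (bounds \<Delta> \<gamma> p0 lam \<theta> X t j) (U' t j)
             then 1 / w t j else 0)))"

definition q3 :: "nat \<Rightarrow> nat \<Rightarrow> real \<Rightarrow> real \<Rightarrow> real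
    \<Rightarrow> (nat \<Rightarrow> nat \<Rightarrow> (nat \<Rightarrow> bool) \<Rightarrow> 'p \<Rightarrow> real) \<Rightarrow> 'p
    \<Rightarrow> (nat \<Rightarrow> nat \<Rightarrow> real) \<Rightarrow> (nat \<Rightarrow> nat \<Rightarrow> bool) \<Rightarrow> real" where
  "q3 T N \<Delta> \<gamma> p0 lam \<theta> U X = (if X = fmap T N \<Delta> \<gamma> p0 lam \<theta> U then 1 else 0)"

end

theory Submission
  imports Defs
begin

context
  fixes \<Delta> \<gamma> p0 :: real and lam :: "nat \<Rightarrow> nat \<Rightarrow> (nat \<Rightarrow> bool) \<Rightarrow> 'p \<Rightarrow> real" and \<theta> :: 'p
  assumes D: "\<Delta> > 0" and G: "\<gamma> > 0" and P0: "0 < p0" "p0 < 1"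
    and L: "\<And>j t x. lam j t x \<theta> > 0"
begin

lemma pUC_bounds: "0 < pUC lam \<theta> \<Delta> j t x" "pUC lam \<theta> \<Delta> j t x < 1"
proof -
  have "lam j t x \<theta> * \<Delta> > 0" using L D by simp
  then show "0 < pUC lam \<theta> \<Delta> j t x" "pUC lam \<theta> \<Delta> j t x < 1"
    by (auto simp: pUC_def)
qed

lemma pCU_bounds: "0 < pCU \<gamma> \<Delta>" "pCU \<gamma> \<Delta> < 1"
proof -
  have "\<gamma> * \<Delta> > 0" using G D by simp
  then show "0 < pCU \<gamma> \<Delta>" "pCU \<gamma> \<Delta> < 1" by (auto simp: pCU_def)
qed

lemma bounds_ok: "0 \<le> fst (bounds \<Delta> \<gamma> p0 lam \<theta> X t j)"
   "fst (bounds \<Delta> \<gamma> p0 lam \<theta> X t j) < snd (bounds \<Delta> \<gamma> p0 lam \<theta> X t j)"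
   "snd (bounds \<Delta> \<gamma> p0 lam \<theta> X t j) \<le> 1"
  using pUC_bounds[of j t "X (t - 1)"] pCU_bounds P0
  by (auto simp: bounds_def Let_def)

lemma prior_eq: "prior T N \<Delta> \<gamma> p0 lam \<theta> X =
   (\<Prod>t\<le>T. \<Prod>j<N. snd (bounds \<Delta> \<gamma> p0 lam \<theta> X t j) - fst (bounds \<Delta> \<gamma> p0 lam \<theta> X t j))"
proof -
  have e: "{..T} = insert 0 {1..T}" by auto
  show ?thesis
    unfolding prior_def e
    apply (subst prod.insert, simp, simp)
    apply (rule arg_cong2[where f="(*)"])
     apply (rule prod.cong, simp, simp add: bounds_def)
    apply (rule prod.cong, simp)
    apply (rule prod.cong, simp)
    apply (auto simp: bounds_def Let_def pCU_def)
    done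
qed

lemma prior_pos: "prior T N \<Delta> \<gamma> p0 lam \<theta> X > 0"
  unfolding prior_eq using bounds_ok by (auto intro!: prod_pos)

lemma q1_eq:
  assumes "\<And>t j. t \<le> T \<Longrightarrow> j < N \<Longrightarrow> in_box (bounds \<Delta> \<gamma> p0 lam \<theta> X t j) (U t j)"
  shows "q1 T N \<Delta> \<gamma> p0 lam \<theta> X U = 1 / prior T N \<Delta> \<gamma> p0 lam \<theta> X"
proof -
  have "q1 T N \<Delta> \<gamma> p0 lam \<theta> X U = (\<Prod>t\<le>T. \<Prod>j<N.
      1 / (snd (bounds \<Delta> \<gamma> p0 lam \<theta> X t j) - fst (bounds \<Delta> \<gamma> p0 lam \<theta> X t j)))"
    unfolding q1_def
    apply (rule prod.cong, simp)
    apply (rule prod.cong, simp)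
    using assms by (simp add: Let_def case_prod_beta)
  also have "\<dots> = 1 / prior T N \<Delta> \<gamma> p0 lam \<theta> X"
    unfolding prior_eq by (simp add: prod_dividef)
  finally show ?thesis .
qed

lemma fmap_box:
  assumes "t \<le> T" "j < N" "0 < U t j" "U t j < 1"
  shows "in_box (bounds \<Delta> \<gamma> p0 lam \<theta> (fmap T N \<Delta> \<gamma> p0 lam \<theta> U) t j) (U t j)"
proof (cases t)
  case 0
  then show ?thesis using assms by (auto simp: bounds_def fmap_def in_box_def)
next
  case (Suc t')
  have r: "fmap T N \<Delta> \<gamma> p0 lam \<theta> U t' = frow N \<Delta> \<gamma> p0 lam \<theta> U t'"
    using assms Suc by (auto simp: fmap_def)
  show ?thesis using assms Suc r
    by (auto simp: bounds_def Let_def in_box_def fmap_def simp del: frow.simps(2)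
        split: if_splits) (auto)
qed

lemma box_fmap:
  assumes "X \<in> states T N"
    and B: "\<And>t j. t \<le> T \<Longrightarrow> j < N \<Longrightarrow> in_box (bounds \<Delta> \<gamma> p0 lam \<theta> X t j) (U t j)"
  shows "fmap T N \<Delta> \<gamma> p0 lam \<theta> U = X"
proof -
  have st: "X t j \<Longrightarrow> t \<le> T \<and> j < N" for t j using assms(1) by (auto simp: states_def)
  have "t \<le> T \<Longrightarrow> X t = frow N \<Delta> \<gamma> p0 lam \<theta> U t" for t
  proof (induction t)
    case 0
    show ?case
    proof
      fix j show "X 0 j = frow N \<Delta> \<gamma> p0 lam \<theta> U 0 j"
        using st[of 0 j] B[of 0 j] by (cases "j < N") (auto simp: bounds_def in_box_def split: if_splits)
    qed
  next
    case (Suc t)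
    then have IH: "X t = frow N \<Delta> \<gamma> p0 lam \<theta> U t" by simp
    show ?case
    proof
      fix j show "X (Suc t) j = frow N \<Delta> \<gamma> p0 lam \<theta> U (Suc t) j"
        using st[of "Suc t" j] B[of "Suc t" j] Suc.prems
        by (cases "j < N") (auto simp: bounds_def in_box_def Let_def IH[symmetric] split: if_splits)
    qed
  qed
  then show ?thesis using st by (auto simp: fmap_def fun_eq_iff)
qed

end

lemma sum2_ne: "(\<Sum>t\<le>(T::nat). \<Sum>j<(N::nat). (f t j::real)) \<noteq> 0 \<Longrightarrow> \<exists>t\<le>T. \<exists>j<N. f t j \<noteq> 0"
  by (meson atMost_iff lessThan_iff sum.not_neutral_contains_not_neutral)

lemma q2_ex: "q2 T N \<Delta> \<gamma> p0 lam \<theta> U Us \<noteq> 0 \<Longrightarrow> \<exists>t0\<le>T. \<exists>j0<N.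
   (\<forall>t''\<le>T. \<forall>j''<N. (t'', j'') \<noteq> (t0, j0) \<longrightarrow> Us t'' j'' = U t'' j'') \<and>
                0 < Us t0 j0 \<and> Us t0 j0 < 1"
  unfolding q2_def Let_def
  by (drule sum2_ne) (auto split: if_splits)

lemma alg: "(Z::real) \<noteq> 0 \<Longrightarrow> lX \<noteq> 0 \<Longrightarrow> pX \<noteq> 0 \<Longrightarrow> pXs \<noteq> 0 \<Longrightarrow> b \<noteq> 0 \<Longrightarrow>
   (lXs*pXs/Z)/(lX*pX/Z) * ((1/pXs*a*1)/(1/pX*b*1)) = lXs/lX*(a/b)"
  by (simp add: field_simps)

theorem proposition1:
  fixes T N :: nat and \<Delta> \<gamma> p0 se sp :: real
    and lam :: "nat \<Rightarrow> nat \<Rightarrow> (nat \<Rightarrow> bool) \<Rightarrow> 'p \<Rightarrow> real" and \<theta> :: 'p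
    and S :: "(nat \<times> nat) set" and Y :: "nat \<Rightarrow> nat \<Rightarrow> bool"
    and X Xs :: "nat \<Rightarrow> nat \<Rightarrow> bool" and U Us :: "nat \<Rightarrow> nat \<Rightarrow> real"
  assumes "\<Delta> > 0" and "\<gamma> > 0" and "0 < p0" and "p0 < 1"
    and "\<And>j t x. lam j t x \<theta> > 0"
    and "0 \<le> se" and "se \<le> 1" and "0 \<le> sp" and "sp \<le> 1"
    and "S \<subseteq> {..T} \<times> {..<N}"
    and "X \<in> states T N"
    and "posterior T N \<Delta> \<gamma> p0 lam \<theta> S se sp Y X > 0"
    and "q1 T N \<Delta> \<gamma> p0 lam \<theta> X U > 0"
    and "q2 T N \<Delta> \<gamma> p0 lam \<theta> U Us > 0"
    and "Xs = fmap T N \<Delta> \<gamma> p0 lam \<theta> Us"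
  shows "min 1 (posterior T N \<Delta> \<gamma> p0 lam \<theta> S se sp Y Xs / posterior T N \<Delta> \<gamma> p0 lam \<theta> S se sp Y X *
            ((q1 T N \<Delta> \<gamma> p0 lam \<theta> Xs Us * q2 T N \<Delta> \<gamma> p0 lam \<theta> Us U * q3 T N \<Delta> \<gamma> p0 lam \<theta> U X) /
             (q1 T N \<Delta> \<gamma> p0 lam \<theta> X U * q2 T N \<Delta> \<gamma> p0 lam \<theta> U Us * q3 T N \<Delta> \<gamma> p0 lam \<theta> Us Xs)))
       = min 1 (lik S se sp Y Xs / lik S se sp Y X *
            (q2 T N \<Delta> \<gamma> p0 lam \<theta> Us U / q2 T N \<Delta> \<gamma> p0 lam \<theta> U Us))"
proof -
  note A = assms(1-5)
  let ?b = "bounds \<Delta> \<gamma> p0 lam \<theta>"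
  have boxU: "in_box (?b X t j) (U t j)" if "t \<le> T" "j < N" for t j
  proof (rule ccontr)
    assume "\<not> in_box (?b X t j) (U t j)"
    then have "q1 T N \<Delta> \<gamma> p0 lam \<theta> X U = 0"
    proof -
      have "(\<Prod>j<N. (let (a, b) = ?b X t j in
                        if in_box (a, b) (U t j) then 1 / (b - a) else (0::real))) = 0"
        using that \<open>\<not> in_box (?b X t j) (U t j)\<close>
        by (subst prod_zero_iff) (auto simp: Let_def case_prod_beta)
      then show ?thesis unfolding q1_def using that
        by (subst prod_zero_iff) auto
    qed
    then show False using assms(13) by simp
  qed
  have U01: "0 < U t j \<and> U t j < 1" if "t \<le> T" "j < N" for t j
    using boxU[OF that] bounds_ok[of \<Delta> \<gamma> p0 lam \<theta>, OF A, of X t j] by (auto simp: in_box_def)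
  have fU: "fmap T N \<Delta> \<gamma> p0 lam \<theta> U = X"
    by (rule box_fmap[of \<Delta> \<gamma> p0 lam \<theta>, OF A assms(11)]) (rule boxU)
  have q1X: "q1 T N \<Delta> \<gamma> p0 lam \<theta> X U = 1 / prior T N \<Delta> \<gamma> p0 lam \<theta> X"
    by (rule q1_eq[of \<Delta> \<gamma> p0 lam \<theta>, OF A]) (rule boxU)
  obtain t0 j0 where t0: "t0 \<le> T" "j0 < N" and
    C: "(\<forall>t''\<le>T. \<forall>j''<N. (t'', j'') \<noteq> (t0, j0) \<longrightarrow> Us t'' j'' = U t'' j'') \<and>
                0 < Us t0 j0 \<and> Us t0 j0 < 1"
    using q2_ex[of T N \<Delta> \<gamma> p0 lam \<theta> U Us] assms(14) by auto
  have Us01: "0 < Us t j \<and> Us t j < 1" if "t \<le> T" "j < N" for t j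
    using C U01[OF that] that by (cases "(t, j) = (t0, j0)") auto
  have q1Xs: "q1 T N \<Delta> \<gamma> p0 lam \<theta> Xs Us = 1 / prior T N \<Delta> \<gamma> p0 lam \<theta> Xs"
    apply (rule q1_eq[of \<Delta> \<gamma> p0 lam \<theta>, OF A])
    unfolding assms(15) using fmap_box[of \<Delta> \<gamma> p0 lam \<theta>, OF A] Us01 by blast
  have q3a: "q3 T N \<Delta> \<gamma> p0 lam \<theta> U X = 1" using fU by (simp add: q3_def)
  have q3b: "q3 T N \<Delta> \<gamma> p0 lam \<theta> Us Xs = 1" using assms(15) by (simp add: q3_def)
  define Z where "Z = (\<Sum>X'\<in>states T N. lik S se sp Y X' * prior T N \<Delta> \<gamma> p0 lam \<theta> X')"
  have pX: "prior T N \<Delta> \<gamma> p0 lam \<theta> X > 0" and pXs: "prior T N \<Delta> \<gamma> p0 lam \<theta> Xs > 0"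
    using prior_pos[of \<Delta> \<gamma> p0 lam \<theta>, OF A] by auto
  have Z0: "Z \<noteq> 0" and lX: "lik S se sp Y X \<noteq> 0"
    using assms(12) unfolding posterior_def Z_def[symmetric] by auto
  have q2ne: "q2 T N \<Delta> \<gamma> p0 lam \<theta> U Us \<noteq> 0" using assms(14) by simp
  have "posterior T N \<Delta> \<gamma> p0 lam \<theta> S se sp Y Xs / posterior T N \<Delta> \<gamma> p0 lam \<theta> S se sp Y X *
            ((q1 T N \<Delta> \<gamma> p0 lam \<theta> Xs Us * q2 T N \<Delta> \<gamma> p0 lam \<theta> Us U * q3 T N \<Delta> \<gamma> p0 lam \<theta> U X) /
             (q1 T N \<Delta> \<gamma> p0 lam \<theta> X U * q2 T N \<Delta> \<gamma> p0 lam \<theta> U Us * q3 T N \<Delta> \<gamma> p0 lam \<theta> Us Xs))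
      = lik S se sp Y Xs / lik S se sp Y X *
            (q2 T N \<Delta> \<gamma> p0 lam \<theta> Us U / q2 T N \<Delta> \<gamma> p0 lam \<theta> U Us)"
    unfolding posterior_def Z_def[symmetric] q1X q1Xs q3a q3b
    using Z0 lX pX pXs q2ne by (intro alg) auto
  then show ?thesis by simp
qed

end
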